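(* (Soundness.) Every branch that is refutable in the tableau calculus $\mathcal{T}$ described in the context is unsatisfiable.
   Context: Types: there is a countable set of base types, among them a distinguished base type $o$; the other base types are sorts ($\alpha$ ranges over sorts). Every base type is a type, and if $\sigma,\tau$ are types then $\sigma\tau$ is a type (functions from $\sigma$ to $\tau$; $\sigma\tau\mu=\sigma(\tau\mu)$). Countably many names, each with a unique type, infinitely many of each type. Terms: names; $st:\mu$ if $s:\tau\mu,t:\tau$; $\lambda x.t:\sigma\tau$ if $x:\sigma$ name, $t:\tau$. Logical constants: $\neg:oo$ and $=_\sigma:\sigma\sigma o$ for each type $\sigma$; other names are variables. Formulas are terms of type $o$; $s=_\sigma t$ is $(=_\sigma s)t$, $s\neq_\sigma t$ is $\neg(s=_\sigma t)$. Semantics: a frame $\mathcal{D}$ maps each type to a nonempty set with $\mathcal{D}(\sigma\tau)\subseteq(\mathcal{D}\sigma\to\mathcal{D}\tau)$. An assignment $\mathcal{I}$ into $\mathcal{D}$ extends $\mathcal{D}$ and maps each name $x:\sigma$ into $\mathcal{D}\sigma$; $\mathcal{I}^x_a$ is the update at $x$. Partial evaluation: $\hat{\mathcal{I}}x=\mathcal{I}x$; $\hat{\mathcal{I}}(st)=(\hat{\mathcal{I}}s)(\hat{\mathcal{I}}t)$ when both defined; $\hat{\mathcal{I}}(\lambda x.s)=f$ if $f\in\mathcal{D}(\sigma\tau)$ and $\widehat{\mathcal{I}^x_a}s=fa$ for all $a\in\mathcal{D}\sigma$. An interpretation is an assignment with total evaluation. Logical: $\mathcal{I}o=\{0,1\}$,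 $\mathcal{I}(\neg)$ negation, $\mathcal{I}(=_\sigma)$ identity. A model of a set $A$ of formulas is a logical interpretation with $\hat{\mathcal{I}}s=1$ for all $s\in A$; satisfiable = has a model. Normalization: fixed type-preserving total $[\cdot]$ on terms; $s$ normal iff $[s]=s$; (N1) $[[s]]=[s]$; (N2) $[[s]t]=[st]$; (N3) $[xs_1\dots s_n]=x[s_1]\dots[s_n]$ for a name $x$, $n\ge0$, $xs_1\dots s_n$ of base type; (N4) $\hat{\mathcal{I}}[s]=\hat{\mathcal{I}}s$ for every interpretation. Tableau calculus $\mathcal{T}$: a branch is a set of normal formulas. A rule instance $A/A_1\dots A_n$: $A$ a finite branch containing the premises, $A_i=A\cup$(formulas of the $i$-th alternative). Rules ($x$ a variable): (DN) $\neg\neg s$ / $s$. (BQ) $s=_ot$ / $\{s,t\}\mid\{\neg s,\neg t\}$. (BE) $s\neq_o t$ / $\{s,\neg t\}\mid\{\neg s,t\}$. (FQ) $s=_{\sigma\tau}t$ / $[su]=[tu]$, $u:\sigma$ normal. (FE) $s\neq_{\sigma\tau}t$ / $[sx]\neq[tx]$, $x:\sigma$ not free in $A$. (Mat) $xs_1\dots s_n,\neg xt_1\dots t_n$ / $s_1\neq t_1\mid\dots\mid s_n\neq t_n$ ($n\ge 0$). (Dec) $xs_1\dots s_n\neq_\alpha xt_1\dots t_n$ / $s_1\neq t_1\mid\dots\mid s_n\neq t_n$ ($n\ge0$). (Con) $s=_\alpha t,u\neq_\alpha v$ / $\{s\neq u,t\neq u\}\mid\{s\neq v,t\neq v\}$.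 $A$ is closed if $x,\neg x\in A$ for a variable $x:o$ or $x\neq_\alpha x\in A$ for a variable $x:\alpha$. Restrictions: (1) instances with $A$ closed are admitted only for Mat or Dec with $n=0$; (2) FE on $s\neq t\in A$ only if no variable $x$ has $[sx]\neq[tx]\in A$. Refutable branches: least set such that if $A/A_1\dots A_n$ is an admitted instance and all $A_i$ are refutable, then $A$ is refutable. *)

theory Defs
  imports Main
begin

text \<open>Base types are indexed by naturals; Base 0 is the distinguished type o,
  all other base types are sorts.\<close>
datatype ty = Base nat | Fun ty ty

abbreviation Ob :: ty where "Ob \<equiv> Base 0"

definition is_sort :: "ty \<Rightarrow> bool" where
  "is_sort t \<longleftrightarrow> (\<exists>n. n \<noteq> 0 \<and> t = Base n)"

datatype name = Vr nat ty | Neg | EqN ty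

fun nty :: "name \<Rightarrow> ty" where
  "nty (Vr n s) = s"
| "nty Neg = Fun Ob Ob"
| "nty (EqN s) = Fun s (Fun s Ob)"

definition is_var :: "name \<Rightarrow> bool" where
  "is_var x \<longleftrightarrow> (\<exists>n s. x = Vr n s)"

datatype tm = Nm name | App tm tm | Lam name tm

text \<open>Typing (None = not a well-typed term).\<close>
fun tyof :: "tm \<Rightarrow> ty option" where
  "tyof (Nm x) = Some (nty x)"
| "tyof (App s t) = (case tyof s of
      Some (Fun a b) \<Rightarrow> (if tyof t = Some a then Some b else None)
    | _ \<Rightarrow> None)"
| "tyof (Lam x s) = map_option (Fun (nty x)) (tyof s)"

fun frees :: "tm \<Rightarrow> name set" where
  "frees (Nm x) = {x}"
| "frees (App s t) = frees s \<union> frees t"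
| "frees (Lam x s) = frees s - {x}"

definition neg :: "tm \<Rightarrow> tm" where
  "neg s = App (Nm Neg) s"

definition eq :: "ty \<Rightarrow> tm \<Rightarrow> tm \<Rightarrow> tm" where
  "eq s a b = App (App (Nm (EqN s)) a) b"

definition neq :: "ty \<Rightarrow> tm \<Rightarrow> tm \<Rightarrow> tm" where
  "neq s a b = neg (eq s a b)"

definition apps :: "tm \<Rightarrow> tm list \<Rightarrow> tm" where
  "apps h ss = foldl App h ss"

text \<open>This encodes
  D(st) \<subseteq> (D s \<rightarrow> D t) over an arbitrary value type 'v.\<close>
record 'v frame =
  D :: "ty \<Rightarrow> 'v set"
  ap :: "'v \<Rightarrow> 'v \<Rightarrow> 'v"

definition is_frame :: "'v frame \<Rightarrow> bool" where
  "is_frame F \<longleftrightarrow>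
     (\<forall>s. D F s \<noteq> {}) \<and>
     (\<forall>s t f a. f \<in> D F (Fun s t) \<longrightarrow> a \<in> D F s \<longrightarrow> ap F f a \<in> D F t) \<and>
     (\<forall>s t f g. f \<in> D F (Fun s t) \<longrightarrow> g \<in> D F (Fun s t) \<longrightarrow>
        (\<forall>a \<in> D F s. ap F f a = ap F g a) \<longrightarrow> f = g)"

definition is_asg :: "'v frame \<Rightarrow> (name \<Rightarrow> 'v) \<Rightarrow> bool" where
  "is_asg F I \<longleftrightarrow> is_frame F \<and> (\<forall>x. I x \<in> D F (nty x))"

primrec eval :: "tm \<Rightarrow> 'v frame \<Rightarrow> (name \<Rightarrow> 'v) \<Rightarrow> 'v option" where
  "eval (Nm x) F I = Some (I x)"
| "eval (App s t) F I = (case (eval s F I, eval t F I) of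
      (Some f, Some a) \<Rightarrow> Some (ap F f a)
    | _ \<Rightarrow> None)"
| "eval (Lam x s) F I = (case tyof s of
      None \<Rightarrow> None
    | Some t \<Rightarrow>
        (if \<exists>f \<in> D F (Fun (nty x) t). \<forall>a \<in> D F (nty x). eval s F (I(x := a)) = Some (ap F f a)
         then Some (THE f. f \<in> D F (Fun (nty x) t) \<and>
                    (\<forall>a \<in> D F (nty x). eval s F (I(x := a)) = Some (ap F f a)))
         else None))"

definition interp :: "'v frame \<Rightarrow> (name \<Rightarrow> 'v) \<Rightarrow> bool" where
  "interp F I \<longleftrightarrow> is_asg F I \<and> (\<forall>t s. tyof t = Some s \<longrightarrow> eval t F I \<noteq> None)"

text \<open>Logical interpretation; T and Fa play the roles of the truth values 1 and 0.\<close>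
definition logical :: "'v frame \<Rightarrow> (name \<Rightarrow> 'v) \<Rightarrow> 'v \<Rightarrow> 'v \<Rightarrow> bool" where
  "logical F I T Fa \<longleftrightarrow> interp F I \<and> T \<noteq> Fa \<and> D F Ob = {T, Fa} \<and>
     ap F (I Neg) T = Fa \<and> ap F (I Neg) Fa = T \<and>
     (\<forall>s. \<forall>a \<in> D F s. \<forall>b \<in> D F s. ap F (ap F (I (EqN s)) a) b = (if a = b then T else Fa))"

definition model :: "'v frame \<Rightarrow> (name \<Rightarrow> 'v) \<Rightarrow> 'v \<Rightarrow> 'v \<Rightarrow> tm set \<Rightarrow> bool" where
  "model F I T Fa A \<longleftrightarrow> logical F I T Fa \<and> (\<forall>s \<in> A. eval s F I = Some T)"

definition satisfiable :: "'v itself \<Rightarrow> tm set \<Rightarrow> bool" where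
  "satisfiable _ A \<longleftrightarrow> (\<exists>(F :: 'v frame) I T Fa. model F I T Fa A)"

definition is_normalizer :: "'v itself \<Rightarrow> (tm \<Rightarrow> tm) \<Rightarrow> bool" where
  "is_normalizer _ nf \<longleftrightarrow>
     (\<forall>s. tyof s \<noteq> None \<longrightarrow> tyof (nf s) = tyof s) \<and>
     (\<forall>s. tyof s \<noteq> None \<longrightarrow> nf (nf s) = nf s) \<and>
     (\<forall>s t. tyof (App s t) \<noteq> None \<longrightarrow> nf (App (nf s) t) = nf (App s t)) \<and>
     (\<forall>x ss b. tyof (apps (Nm x) ss) = Some (Base b) \<longrightarrow>
        nf (apps (Nm x) ss) = apps (Nm x) (map nf ss)) \<and>
     (\<forall>(F :: 'v frame) I s. interp F I \<longrightarrow> tyof s \<noteq> None \<longrightarrow> eval (nf s) F I = eval s F I)"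

definition normal_formula :: "(tm \<Rightarrow> tm) \<Rightarrow> tm \<Rightarrow> bool" where
  "normal_formula nf s \<longleftrightarrow> tyof s = Some Ob \<and> nf s = s"

definition branch :: "(tm \<Rightarrow> tm) \<Rightarrow> tm set \<Rightarrow> bool" where
  "branch nf A \<longleftrightarrow> (\<forall>s \<in> A. normal_formula nf s)"

definition closed :: "tm set \<Rightarrow> bool" where
  "closed A \<longleftrightarrow>
     (\<exists>n. Nm (Vr n Ob) \<in> A \<and> neg (Nm (Vr n Ob)) \<in> A) \<or>
     (\<exists>n a. is_sort a \<and> neq a (Nm (Vr n a)) (Nm (Vr n a)) \<in> A)"

definition frees_set :: "tm set \<Rightarrow> name set" where
  "frees_set A = (\<Union>s \<in> A. frees s)"

text \<open>Admitted rule instances A / A \<union> K1 ... A \<union> Kn, given by the list [K1,...,Kn]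
  of the formulas added in each alternative (restrictions (1) and (2) built in).\<close>
inductive inst :: "(tm \<Rightarrow> tm) \<Rightarrow> tm set \<Rightarrow> tm set list \<Rightarrow> bool" for nf where
  DN: "\<not> closed A \<Longrightarrow> neg (neg s) \<in> A \<Longrightarrow> inst nf A [{s}]"
| BQ: "\<not> closed A \<Longrightarrow> eq Ob s t \<in> A \<Longrightarrow> inst nf A [{s, t}, {neg s, neg t}]"
| BE: "\<not> closed A \<Longrightarrow> neq Ob s t \<in> A \<Longrightarrow> inst nf A [{s, neg t}, {neg s, t}]"
| FQ: "\<not> closed A \<Longrightarrow> eq (Fun a b) s t \<in> A \<Longrightarrow> tyof u = Some a \<Longrightarrow> nf u = u \<Longrightarrow>
       inst nf A [{eq b (nf (App s u)) (nf (App t u))}]"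
| FE: "\<not> closed A \<Longrightarrow> neq (Fun a b) s t \<in> A \<Longrightarrow> Vr n a \<notin> frees_set A \<Longrightarrow>
       \<not> (\<exists>m. neq b (nf (App s (Nm (Vr m a)))) (nf (App t (Nm (Vr m a)))) \<in> A) \<Longrightarrow>
       inst nf A [{neq b (nf (App s (Nm (Vr n a)))) (nf (App t (Nm (Vr n a))))}]"
| Mat: "(ss \<noteq> [] \<longrightarrow> \<not> closed A) \<Longrightarrow> is_var x \<Longrightarrow> length ss = length ts \<Longrightarrow>
       apps (Nm x) ss \<in> A \<Longrightarrow> neg (apps (Nm x) ts) \<in> A \<Longrightarrow>
       inst nf A (map2 (\<lambda>s t. {neq (the (tyof s)) s t}) ss ts)"
| Dec: "(ss \<noteq> [] \<longrightarrow> \<not> closed A) \<Longrightarrow> is_var x \<Longrightarrow> is_sort a \<Longrightarrow> length ss = length ts \<Longrightarrow>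
       neq a (apps (Nm x) ss) (apps (Nm x) ts) \<in> A \<Longrightarrow>
       inst nf A (map2 (\<lambda>s t. {neq (the (tyof s)) s t}) ss ts)"
| Con: "\<not> closed A \<Longrightarrow> is_sort a \<Longrightarrow> eq a s t \<in> A \<Longrightarrow> neq a u v \<in> A \<Longrightarrow>
       inst nf A [{neq a s u, neq a t u}, {neq a s v, neq a t v}]"

inductive refutable :: "(tm \<Rightarrow> tm) \<Rightarrow> tm set \<Rightarrow> bool" for nf where
  "finite A \<Longrightarrow> branch nf A \<Longrightarrow> inst nf A Ks \<Longrightarrow>
   (\<forall>K \<in> set Ks. refutable nf (A \<union> K)) \<Longrightarrow> refutable nf A"

end

theory Submission
  imports Defs
begin

lemma ty_neg: "tyof (neg s) = Some r \<Longrightarrow> tyof s = Some Ob \<and> r = Ob"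
  by (auto simp: neg_def split: option.splits ty.splits if_splits)

lemma ty_eq: "tyof (eq \<sigma> a b) = Some r \<Longrightarrow> tyof a = Some \<sigma> \<and> tyof b = Some \<sigma> \<and> r = Ob"
  by (auto simp: eq_def split: option.splits ty.splits if_splits)

lemma ty_neq: "tyof (neq \<sigma> a b) = Some r \<Longrightarrow> tyof a = Some \<sigma> \<and> tyof b = Some \<sigma>"
  unfolding neq_def using ty_neg ty_eq by blast

lemma ev_D: "is_asg F I \<Longrightarrow> tyof t = Some \<sigma> \<Longrightarrow> eval t F I = Some v \<Longrightarrow> v \<in> D F \<sigma>"
proof (induction t arbitrary: \<sigma> v)
  case (Nm x)
  then show ?case by (auto simp: is_asg_def)
next
  case (App s t)
  from App.prems obtain a where ts: "tyof s = Some (Fun a \<sigma>)" "tyof t = Some a"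
    by (auto split: option.splits ty.splits if_splits)
  from App.prems obtain f c where ev: "eval s F I = Some f" "eval t F I = Some c" "v = ap F f c"
    by (auto split: option.splits)
  have "f \<in> D F (Fun a \<sigma>)" "c \<in> D F a" using App.IH App.prems(1) ts ev by auto
  then show ?case using App.prems(1) ev by (auto simp: is_asg_def is_frame_def)
next
  case (Lam x s)
  from Lam.prems obtain \<tau> where ts: "tyof s = Some \<tau>" "\<sigma> = Fun (nty x) \<tau>" by auto
  let ?P = "\<lambda>f. f \<in> D F (Fun (nty x) \<tau>) \<and> (\<forall>a\<in>D F (nty x). eval s F (I(x:=a)) = Some (ap F f a))"
  have ex: "\<exists>f. ?P f" and vv: "v = (THE f. ?P f)" using Lam.prems ts by (auto split: if_splits)
  have uniq: "f = g" if "?P f" "?P g" for f g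
  proof -
    have "\<forall>a\<in>D F (nty x). ap F f a = ap F g a" using that by force
    then show ?thesis using that Lam.prems(1) unfolding is_asg_def is_frame_def by blast
  qed
  have "?P v" unfolding vv by (rule theI') (use ex uniq in blast)
  then show ?case using ts by simp
qed

lemma ev_coinc: "(\<forall>y\<in>frees t. I y = J y) \<Longrightarrow> eval t F I = eval t F J"
proof (induction t arbitrary: I J)
  case (Nm x)
  then show ?case by simp
next
  case (Lam x s)
  have "eval s F (I(x:=a)) = eval s F (J(x:=a))" for a
  proof (rule Lam.IH)
    show "\<forall>y\<in>frees s. (I(x := a)) y = (J(x := a)) y" using Lam.prems by simp
  qed
  then show ?case by (simp only: eval.simps)
next
  case (App t1 t2)
  have "eval t1 F I = eval t1 F J"
    by (rule App.IH(1)) (use App.prems in simp)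
  moreover have "eval t2 F I = eval t2 F J"
    by (rule App.IH(2)) (use App.prems in simp)
  ultimately show ?case by (simp only: eval.simps)
qed

lemma val:
  assumes "interp F I" "tyof t = Some \<sigma>"
  shows "\<exists>v. eval t F I = Some v \<and> v \<in> D F \<sigma>"
proof -
  have "eval t F I \<noteq> None" using assms unfolding interp_def by blast
  then obtain v where v: "eval t F I = Some v" by blast
  have "is_asg F I" using assms(1) by (simp add: interp_def)
  then have "v \<in> D F \<sigma>" by (rule ev_D[OF _ assms(2) v])
  then show ?thesis using v by blast
qed

lemma interp_upd:
  assumes "interp F I" "c \<in> D F (nty y)"
  shows "interp F (I(y:=c))"
  unfolding interp_def
proof (intro conjI allI impI)
  show "is_asg F (I(y := c))" using assms by (auto simp: interp_def is_asg_def)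
  fix t \<sigma> assume ty: "tyof t = Some \<sigma>"
  have "tyof (App (Lam y t) (Nm y)) = Some \<sigma>" using ty by simp
  then have "eval (App (Lam y t) (Nm y)) F I \<noteq> None" using assms(1) unfolding interp_def by blast
  then obtain f where "eval (Lam y t) F I = Some f" by (auto split: option.splits)
  then have "\<exists>f \<in> D F (Fun (nty y) \<sigma>). \<forall>a\<in>D F (nty y). eval t F (I(y:=a)) = Some (ap F f a)"
    using ty by (simp split: if_splits)
  then show "eval t F (I(y := c)) \<noteq> None" using assms(2) by force
qed

lemma ty_App: "tyof (App h s) \<noteq> None \<Longrightarrow> \<exists>a b. tyof h = Some (Fun a b) \<and> tyof s = Some a"
proof (cases "tyof h")
  case (Some \<tau>)
  assume "tyof (App h s) \<noteq> None"
  then show ?thesis using Some by (cases \<tau>) (auto split: if_splits)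
qed simp

lemma apps_Cons: "apps h (s#ss) = apps (App h s) ss" by (simp add: apps_def)

lemma ty_apps_head: "tyof (apps h ss) \<noteq> None \<Longrightarrow> tyof h \<noteq> None"
proof (induction ss arbitrary: h)
  case Nil then show ?case by (simp add: apps_def)
next
  case (Cons s ss)
  then have "tyof (App h s) \<noteq> None" using Cons.IH[of "App h s"] by (metis apps_Cons)
  then show ?case using ty_App by blast
qed

lemma ty_apps_args:
  "tyof (apps h1 ss) \<noteq> None \<Longrightarrow> tyof (apps h2 ts) \<noteq> None \<Longrightarrow> tyof h1 = tyof h2 \<Longrightarrow>
   length ss = length ts \<Longrightarrow> i < length ss \<Longrightarrow> tyof (ss!i) = tyof (ts!i) \<and> tyof (ss!i) \<noteq> None"
proof (induction ss arbitrary: h1 h2 ts i)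
  case Nil then show ?case by simp
next
  case (Cons s ss)
  then obtain t ts' where tsd: "ts = t # ts'" by (cases ts) auto
  have a1: "tyof (apps (App h1 s) ss) \<noteq> None" "tyof (apps (App h2 t) ts') \<noteq> None"
    using Cons.prems tsd by (auto simp: apps_Cons)
  have h1: "tyof (App h1 s) \<noteq> None" "tyof (App h2 t) \<noteq> None" using a1 ty_apps_head by blast+
  then obtain a b where ab: "tyof h1 = Some (Fun a b)" "tyof s = Some a"
    using ty_App by blast
  then have "tyof t = Some a" using ty_App[OF h1(2)] Cons.prems(3) by auto
  moreover have "tyof (App h1 s) = tyof (App h2 t)" using ab calculation Cons.prems(3) by simp
  ultimately show ?case
  proof (cases i)
    case 0 then show ?thesis using ab \<open>tyof t = Some a\<close> tsd by simp
  next
    case (Suc j)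
    have j: "j < length ss" using Cons.prems(5) Suc by simp
    have l: "length ss = length ts'" using Cons.prems(4) tsd by simp
    have "tyof (ss!j) = tyof (ts'!j) \<and> tyof (ss!j) \<noteq> None"
      using Cons.IH[OF a1 \<open>tyof (App h1 s) = tyof (App h2 t)\<close> l j] .
    then show ?thesis using Suc tsd by (metis nth_Cons_Suc)
  qed
qed

lemma eval_apps: "eval h1 F I = eval h2 F I \<Longrightarrow> list_all2 (\<lambda>s t. eval s F I = eval t F I) ss ts \<Longrightarrow>
  eval (apps h1 ss) F I = eval (apps h2 ts) F I"
proof (induction ss arbitrary: h1 h2 ts)
  case Nil then show ?case by (simp add: apps_def)
next
  case (Cons s ss)
  then obtain t ts' where tsd: "ts = t # ts'" by (cases ts) auto
  have "eval (App h1 s) F I = eval (App h2 t) F I" using Cons.prems tsd by simp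
  then show ?case using Cons.IH Cons.prems tsd by (simp add: apps_Cons)
qed

lemma eval_neg: "eval s F I = Some v \<Longrightarrow> eval (neg s) F I = Some (ap F (I Neg) v)"
  by (simp add: neg_def)

lemma eval_eq: "eval a F I = Some x \<Longrightarrow> eval b F I = Some y \<Longrightarrow>
   eval (eq \<sigma> a b) F I = Some (ap F (ap F (I (EqN \<sigma>)) x) y)"
  by (simp add: eq_def)

lemma eq_val: "logical F I T Fa \<Longrightarrow> eval a F I = Some x \<Longrightarrow> eval b F I = Some y \<Longrightarrow>
  x \<in> D F \<sigma> \<Longrightarrow> y \<in> D F \<sigma> \<Longrightarrow> eval (eq \<sigma> a b) F I = Some (if x = y then T else Fa)"
proof -
  assume L: "logical F I T Fa" and *: "eval a F I = Some x" "eval b F I = Some y"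
    "x \<in> D F \<sigma>" "y \<in> D F \<sigma>"
  have "ap F (ap F (I (EqN \<sigma>)) x) y = (if x = y then T else Fa)"
    using L *(3,4) unfolding logical_def by blast
  then show ?thesis using eval_eq[OF *(1,2)] by simp
qed

lemma neq_val: "logical F I T Fa \<Longrightarrow> eval a F I = Some x \<Longrightarrow> eval b F I = Some y \<Longrightarrow>
  x \<in> D F \<sigma> \<Longrightarrow> y \<in> D F \<sigma> \<Longrightarrow> eval (neq \<sigma> a b) F I = Some (if x = y then Fa else T)"
proof -
  assume L: "logical F I T Fa" and *: "eval a F I = Some x" "eval b F I = Some y"
    "x \<in> D F \<sigma>" "y \<in> D F \<sigma>"
  have "eval (eq \<sigma> a b) F I = Some (if x = y then T else Fa)" using eq_val[OF L *] .
  then show ?thesis using L unfolding neq_def logical_def by (simp add: eval_neg)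
qed

lemma Ob_cases: "logical F I T Fa \<Longrightarrow> v \<in> D F Ob \<Longrightarrow> v = T \<or> v = Fa"
  by (auto simp: logical_def)

lemma neg_true: "logical F I T Fa \<Longrightarrow> eval s F I = Some v \<Longrightarrow> v \<in> D F Ob \<Longrightarrow>
  (eval (neg s) F I = Some T) = (v = Fa)"
  by (auto simp: logical_def eval_neg)

lemma apps_split:
  assumes L: "logical F I T Fa"
    and ne: "eval (apps (Nm x) ss) F I \<noteq> eval (apps (Nm x) ts) F I"
    and t1: "tyof (apps (Nm x) ss) \<noteq> None" and t2: "tyof (apps (Nm x) ts) \<noteq> None"
    and len: "length ss = length ts"
  shows "\<exists>K\<in>set (map2 (\<lambda>s t. {neq (the (tyof s)) s t}) ss ts). \<forall>k\<in>K. eval k F I = Some T"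
proof -
  have IT: "interp F I" using L by (simp add: logical_def)
  have "\<not> list_all2 (\<lambda>s t. eval s F I = eval t F I) ss ts"
    using eval_apps[of "Nm x" F I "Nm x"] ne by auto
  then obtain i where i: "i < length ss" "eval (ss!i) F I \<noteq> eval (ts!i) F I"
    using len by (auto simp: list_all2_conv_all_nth)
  from ty_apps_args[OF t1 t2 _ len i(1)] obtain \<sigma> where
    ty: "tyof (ss!i) = Some \<sigma>" "tyof (ts!i) = Some \<sigma>" by (cases "tyof (ss!i)") auto
  obtain p q where pq: "eval (ss!i) F I = Some p" "p \<in> D F \<sigma>" "eval (ts!i) F I = Some q" "q \<in> D F \<sigma>"
    using val[OF IT ty(1)] val[OF IT ty(2)] by auto
  have "p \<noteq> q" using pq i by auto
  have mem: "(ss!i, ts!i) \<in> set (zip ss ts)" using i len by (auto simp: set_zip)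
  have "{neq \<sigma> (ss!i) (ts!i)} \<in> set (map2 (\<lambda>s t. {neq (the (tyof s)) s t}) ss ts)"
    using mem ty by (auto intro!: image_eqI[where x="(ss!i, ts!i)"])
  moreover have "eval (neq \<sigma> (ss!i) (ts!i)) F I = Some T"
    using neq_val[OF L pq(1) pq(3) pq(2) pq(4)] \<open>p \<noteq> q\<close> by simp
  ultimately show ?thesis by blast
qed

lemma step:
  assumes N: "is_normalizer TYPE('v) nf" and inst: "inst nf A Ks" and br: "branch nf A"
    and M: "model (F::'v frame) I T Fa A"
  shows "\<exists>K\<in>set Ks. \<exists>I'. model F I' T Fa (A \<union> K)"
proof -
  have L: "logical F I T Fa" using M by (simp add: model_def)
  have IT: "interp F I" using L by (simp add: logical_def)
  have AS: "is_asg F I" using IT by (simp add: interp_def)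
  have TF: "T \<noteq> Fa" using L by (simp add: logical_def)
  have tyA: "\<And>s. s \<in> A \<Longrightarrow> tyof s = Some Ob" using br by (simp add: branch_def normal_formula_def)
  have trA: "\<And>s. s \<in> A \<Longrightarrow> eval s F I = Some T" using M by (simp add: model_def)
  have N4: "\<And>(F::'v frame) I s. interp F I \<Longrightarrow> tyof s \<noteq> None \<Longrightarrow> eval (nf s) F I = eval s F I"
    using N unfolding is_normalizer_def by blast
  have ext: "\<And>K. (\<forall>k\<in>K. eval k F I = Some T) \<Longrightarrow> model F I T Fa (A \<union> K)"
    using M by (auto simp: model_def)
  have negT: "ap F (I Neg) T = Fa" "ap F (I Neg) Fa = T" using L by (auto simp: logical_def)
  have pick: "\<And>K. K \<in> set Ks \<Longrightarrow> \<forall>k\<in>K. eval k F I = Some T \<Longrightarrow> \<exists>K\<in>set Ks. \<exists>I'. model F I' T Fa (A \<union> K)"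
    using ext by blast
  from inst show ?thesis
  proof cases
    case (DN s)
    have t1: "tyof (neg (neg s)) = Some Ob" using tyA DN by simp
    then have ts: "tyof (neg s) = Some Ob" "tyof s = Some Ob" using ty_neg by blast+
    obtain v where v: "eval s F I = Some v" "v \<in> D F Ob" using val[OF IT ts(2)] by auto
    have v2: "eval (neg s) F I = Some (ap F (I Neg) v)" using eval_neg[OF v(1)] .
    have "ap F (I Neg) v \<in> D F Ob" using ev_D[OF AS ts(1) v2] .
    then have "ap F (I Neg) v = Fa" using neg_true[OF L v2] trA DN by simp
    then have "v = T" using Ob_cases[OF L v(2)] negT TF by auto
    then have "model F I T Fa (A \<union> {s})" using ext[of "{s}"] v by simp
    then show ?thesis using DN by auto
  next
    case (BQ s t)
    from ty_eq[OF tyA[OF BQ(3)]] have ts: "tyof s = Some Ob" "tyof t = Some Ob" by auto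
    obtain x y where xy: "eval s F I = Some x" "x \<in> D F Ob" "eval t F I = Some y" "y \<in> D F Ob"
      using val[OF IT ts(1)] val[OF IT ts(2)] by auto
    have "x = y" using eq_val[OF L xy(1) xy(3) xy(2) xy(4)] trA[OF BQ(3)] TF by (auto split: if_splits)
    then consider "x = T" | "x = Fa" using Ob_cases[OF L xy(2)] by auto
    then show ?thesis
    proof cases
      case 1 then show ?thesis using BQ(1) xy \<open>x = y\<close> by - (rule pick[of "{s, t}"], auto)
    next
      case 2
      then have "eval (neg s) F I = Some T" "eval (neg t) F I = Some T"
        using xy \<open>x = y\<close> negT by (auto simp: eval_neg)
      then show ?thesis using BQ(1) by - (rule pick[of "{neg s, neg t}"], auto)
    qed
  next
    case (BE s t)
    from ty_neq[OF tyA[OF BE(3)]] have ts: "tyof s = Some Ob" "tyof t = Some Ob" by auto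
    obtain x y where xy: "eval s F I = Some x" "x \<in> D F Ob" "eval t F I = Some y" "y \<in> D F Ob"
      using val[OF IT ts(1)] val[OF IT ts(2)] by auto
    have "x \<noteq> y" using neq_val[OF L xy(1) xy(3) xy(2) xy(4)] trA[OF BE(3)] TF by (auto split: if_splits)
    then consider "x = T" "y = Fa" | "x = Fa" "y = T"
      using Ob_cases[OF L xy(2)] Ob_cases[OF L xy(4)] by auto
    then show ?thesis
    proof cases
      case 1
      then have "eval (neg t) F I = Some T" using xy negT by (auto simp: eval_neg)
      then show ?thesis using BE(1) xy 1 by - (rule pick[of "{s, neg t}"], auto)
    next
      case 2
      then have "eval (neg s) F I = Some T" using xy negT by (auto simp: eval_neg)
      then show ?thesis using BE(1) xy 2 by - (rule pick[of "{neg s, t}"], auto)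
    qed
  next
    case (FQ a b s t u)
    from ty_eq[OF tyA[OF FQ(3)]] have ts: "tyof s = Some (Fun a b)" "tyof t = Some (Fun a b)" by auto
    obtain f g where fg: "eval s F I = Some f" "f \<in> D F (Fun a b)" "eval t F I = Some g" "g \<in> D F (Fun a b)"
      using val[OF IT ts(1)] val[OF IT ts(2)] by auto
    have "f = g" using eq_val[OF L fg(1) fg(3) fg(2) fg(4)] trA[OF FQ(3)] TF by (auto split: if_splits)
    obtain c where c: "eval u F I = Some c" "c \<in> D F a" using val[OF IT FQ(4)] by auto
    have tA: "tyof (App s u) = Some b" "tyof (App t u) = Some b" using ts FQ(4) by auto
    have e1: "eval (nf (App s u)) F I = Some (ap F f c)" using N4[OF IT] tA fg c by simp
    have e2: "eval (nf (App t u)) F I = Some (ap F f c)" using N4[OF IT] tA fg c \<open>f = g\<close> by simp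
    have "ap F f c \<in> D F b" using fg c AS unfolding is_asg_def is_frame_def by blast
    then have "eval (eq b (nf (App s u)) (nf (App t u))) F I = Some T"
      using eq_val[OF L e1 e2] by simp
    then show ?thesis using FQ(1) by - (rule pick[of "{eq b (nf (App s u)) (nf (App t u))}"], auto)
  next
    case (FE a b s t n)
    let ?y = "Vr n a"
    from ty_neq[OF tyA[OF FE(3)]] have ts: "tyof s = Some (Fun a b)" "tyof t = Some (Fun a b)" by auto
    obtain f g where fg: "eval s F I = Some f" "f \<in> D F (Fun a b)" "eval t F I = Some g" "g \<in> D F (Fun a b)"
      using val[OF IT ts(1)] val[OF IT ts(2)] by auto
    have "f \<noteq> g" using neq_val[OF L fg(1) fg(3) fg(2) fg(4)] trA[OF FE(3)] TF by (auto split: if_splits)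
    then obtain c where c: "c \<in> D F a" "ap F f c \<noteq> ap F g c"
      using fg AS unfolding is_asg_def is_frame_def by blast
    define I' where "I' = I(?y := c)"
    have IT': "interp F I'" unfolding I'_def using interp_upd[OF IT, of c ?y] c by simp
    have upd: "\<And>z. z \<noteq> ?y \<Longrightarrow> I' z = I z" unfolding I'_def by simp
    have L': "logical F I' T Fa"
    proof -
      have e: "I' Neg = I Neg" "\<And>\<sigma>. I' (EqN \<sigma>) = I (EqN \<sigma>)" using upd by auto
      show ?thesis using L IT' unfolding logical_def e by blast
    qed
    have cof: "eval u F I' = eval u F I" if "frees u \<subseteq> frees_set A" for u
    proof (rule ev_coinc, intro ballI)
      fix z assume "z \<in> frees u"
      then have "z \<noteq> ?y" using that FE(4) by blast
      then show "I' z = I z" by (rule upd)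
    qed
    have coA: "eval u F I' = eval u F I" if "u \<in> A" for u
      using that by (intro cof) (auto simp: frees_set_def)
    have fs: "frees s \<subseteq> frees_set A" "frees t \<subseteq> frees_set A"
      using FE(3) by (auto simp: frees_set_def neq_def neg_def eq_def)
    have es: "eval s F I' = Some f" "eval t F I' = Some g"
      using fg cof[OF fs(1)] cof[OF fs(2)] by simp_all
    have tA: "tyof (App s (Nm ?y)) = Some b" "tyof (App t (Nm ?y)) = Some b" using ts by auto
    have yc: "I' ?y = c" by (simp add: I'_def)
    have e1: "eval (nf (App s (Nm ?y))) F I' = Some (ap F f c)"
      using N4[OF IT', of "App s (Nm ?y)"] tA es yc by simp
    have e2: "eval (nf (App t (Nm ?y))) F I' = Some (ap F g c)"
      using N4[OF IT', of "App t (Nm ?y)"] tA es yc by simp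
    have "ap F f c \<in> D F b" "ap F g c \<in> D F b" using fg c AS unfolding is_asg_def is_frame_def by blast+
    then have "eval (neq b (nf (App s (Nm ?y))) (nf (App t (Nm ?y)))) F I' = Some T"
      using neq_val[OF L' e1 e2] c by simp
    moreover have "model F I' T Fa A" using L' coA trA by (simp add: model_def)
    ultimately have "model F I' T Fa (A \<union> {neq b (nf (App s (Nm ?y))) (nf (App t (Nm ?y)))})"
      by (simp add: model_def)
    then show ?thesis using FE by auto
  next
    case (Mat ss x ts)
    have t1: "tyof (apps (Nm x) ss) = Some Ob" using tyA Mat by simp
    have t2: "tyof (apps (Nm x) ts) = Some Ob" using tyA[OF Mat(6)] ty_neg by blast
    have e1: "eval (apps (Nm x) ss) F I = Some T" using trA Mat by simp
    obtain v where v: "eval (apps (Nm x) ts) F I = Some v" "v \<in> D F Ob" using val[OF IT t2] by auto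
    have "v = Fa" using neg_true[OF L v] trA[OF Mat(6)] by simp
    then have "eval (apps (Nm x) ss) F I \<noteq> eval (apps (Nm x) ts) F I" using e1 v TF by simp
    from apps_split[OF L this] t1 t2 Mat(4) obtain K where
      "K \<in> set Ks" "\<forall>k\<in>K. eval k F I = Some T" using Mat(1) by auto
    then show ?thesis by (rule pick)
  next
    case (Dec ss x a ts)
    from ty_neq[OF tyA[OF Dec(6)]] have t: "tyof (apps (Nm x) ss) = Some a" "tyof (apps (Nm x) ts) = Some a" by auto
    obtain p q where pq: "eval (apps (Nm x) ss) F I = Some p" "p \<in> D F a"
      "eval (apps (Nm x) ts) F I = Some q" "q \<in> D F a"
      using val[OF IT t(1)] val[OF IT t(2)] by auto
    have "p \<noteq> q" using neq_val[OF L pq(1) pq(3) pq(2) pq(4)] trA[OF Dec(6)] TF by (auto split: if_splits)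
    then have "eval (apps (Nm x) ss) F I \<noteq> eval (apps (Nm x) ts) F I" using pq by simp
    from apps_split[OF L this] t Dec(5) obtain K where
      "K \<in> set Ks" "\<forall>k\<in>K. eval k F I = Some T" using Dec(1) by auto
    then show ?thesis by (rule pick)
  next
    case (Con a s t u v)
    from ty_eq[OF tyA[OF Con(4)]] have ts: "tyof s = Some a" "tyof t = Some a" by auto
    from ty_neq[OF tyA[OF Con(5)]] have tu: "tyof u = Some a" "tyof v = Some a" by auto
    obtain p q where pq: "eval s F I = Some p" "p \<in> D F a" "eval t F I = Some q" "q \<in> D F a"
      using val[OF IT ts(1)] val[OF IT ts(2)] by auto
    obtain w z where wz: "eval u F I = Some w" "w \<in> D F a" "eval v F I = Some z" "z \<in> D F a"
      using val[OF IT tu(1)] val[OF IT tu(2)] by auto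
    have "p = q" using eq_val[OF L pq(1) pq(3) pq(2) pq(4)] trA[OF Con(4)] TF by (auto split: if_splits)
    have "w \<noteq> z" using neq_val[OF L wz(1) wz(3) wz(2) wz(4)] trA[OF Con(5)] TF by (auto split: if_splits)
    show ?thesis
    proof (cases "p = w")
      case False
      have "eval (neq a s u) F I = Some T" "eval (neq a t u) F I = Some T"
        using neq_val[OF L pq(1) wz(1) pq(2) wz(2)] neq_val[OF L pq(3) wz(1) pq(4) wz(2)]
          False \<open>p = q\<close> by auto
      then show ?thesis using Con(1) by - (rule pick[of "{neq a s u, neq a t u}"], auto)
    next
      case True
      have "eval (neq a s v) F I = Some T" "eval (neq a t v) F I = Some T"
        using neq_val[OF L pq(1) wz(3) pq(2) wz(4)] neq_val[OF L pq(3) wz(3) pq(4) wz(4)]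
          True \<open>p = q\<close> \<open>w \<noteq> z\<close> by auto
      then show ?thesis using Con(1) by - (rule pick[of "{neq a s v, neq a t v}"], auto)
    qed
  qed
qed

theorem proposition5p1:
  fixes nf :: "tm \<Rightarrow> tm" and A :: "tm set"
  assumes "is_normalizer TYPE('v) nf"
    and "refutable nf A"
  shows "\<not> satisfiable TYPE('v) A"
proof -
  have "\<forall>(F::'v frame) I T Fa. \<not> model F I T Fa A"
    using assms(2)
  proof induction
    case (1 A Ks)
    show ?case
    proof (intro allI notI)
      fix F :: "'v frame" and I T Fa
      assume "model F I T Fa A"
      from step[OF assms(1) 1(3) 1(2) this] obtain K I' where
        "K \<in> set Ks" "model F I' T Fa (A \<union> K)" by blast
      then show False using 1(4) by blast
    qed
  qed
  then show ?thesis unfolding satisfiable_def by blast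
qed

end
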